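(* Let $X\subset\mathbb{R}$, let $\delta>0$ and let $f,g\in C_u(X)$ with $g>0$ and $\|g\|_\infty\le\delta$. Then $N_\delta(\mathrm{graph}(f+g))\ge\frac12 N_\delta(\mathrm{graph}(f))$.
   Context: $C_u(X)$ is the set of uniformly continuous real functions on $X$, $\|\cdot\|_\infty$ is the sup norm on $X$, and $\mathrm{graph}(h)=\{(x,h(x)):x\in X\}$. For $F\subset\mathbb{R}^2$, $N_\delta(F)$ is the number of boxes $B_i^j=[i\delta,(i+1)\delta)\times[j\delta,(j+1)\delta)$ ($i,j\in\mathbb{Z}$) of the disjoint $\delta$-mesh that intersect $F$. *)

theory Defs
  imports "HOL-Analysis.Analysis" "HOL-Library.Extended_Nat"
begin

definition mesh_box :: "real \<Rightarrow> int \<Rightarrow> int \<Rightarrow> (real \<times> real) set" where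
  "mesh_box \<delta> i j = {(x, y). of_int i * \<delta> \<le> x \<and> x < (of_int i + 1) * \<delta> \<and>
                              of_int j * \<delta> \<le> y \<and> y < (of_int j + 1) * \<delta>}"

definition N_delta :: "real \<Rightarrow> (real \<times> real) set \<Rightarrow> enat" where
  "N_delta \<delta> F =
     (let S = {p :: int \<times> int. mesh_box \<delta> (fst p) (snd p) \<inter> F \<noteq> {}}
      in if finite S then enat (card S) else \<infinity>)"

definition graph_on :: "real set \<Rightarrow> (real \<Rightarrow> real) \<Rightarrow> (real \<times> real) set" where
  "graph_on X h = {(x, h x) | x. x \<in> X}"

end

theory Submission
  imports Defs
begin

lemma mesh_box_iff: "(a, b) \<in> mesh_box d i j \<longleftrightarrow>
   of_int i * d \<le> a \<and> a < (of_int i + 1) * d \<and> of_int j * d \<le> b \<and> b < (of_int j + 1) * d"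
  unfolding mesh_box_def by simp

lemma memT: "z \<in> mesh_box d (fst p) (snd p) \<Longrightarrow> z \<in> G \<Longrightarrow> p \<in> {p. mesh_box d (fst p) (snd p) \<inter> G \<noteq> {}}"
  by (simp only: mem_Collect_eq) blast

lemma sub_lemma:
  fixes X :: "real set" and \<delta> :: real and f g :: "real \<Rightarrow> real"
  assumes "\<delta> > 0"
    and "\<forall>x\<in>X. g x > 0"
    and "\<forall>x\<in>X. \<bar>g x\<bar> \<le> \<delta>"
  shows "{p :: int \<times> int. mesh_box \<delta> (fst p) (snd p) \<inter> graph_on X f \<noteq> {}}
     \<subseteq> {p :: int \<times> int. mesh_box \<delta> (fst p) (snd p) \<inter> graph_on X (\<lambda>x. f x + g x) \<noteq> {}}
       \<union> (\<lambda>p. (fst p, snd p - 1)) ` {p :: int \<times> int. mesh_box \<delta> (fst p) (snd p) \<inter> graph_on X (\<lambda>x. f x + g x) \<noteq> {}}"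
proof
  fix p :: "int \<times> int"
  assume "p \<in> {p :: int \<times> int. mesh_box \<delta> (fst p) (snd p) \<inter> graph_on X f \<noteq> {}}"
  then obtain x where x: "x \<in> X" "(x, f x) \<in> mesh_box \<delta> (fst p) (snd p)"
    unfolding graph_on_def by auto
  obtain i j where p: "p = (i, j)" by fastforce
  have xi: "of_int i * \<delta> \<le> x" "x < (of_int i + 1) * \<delta>"
    and fj: "of_int j * \<delta> \<le> f x" "f x < (of_int j + 1) * \<delta>"
    using x(2) unfolding p fst_conv snd_conv mesh_box_iff by blast+
  have g: "0 < g x" "g x \<le> \<delta>" using assms x(1) by auto
  have gr: "(x, f x + g x) \<in> graph_on X (\<lambda>x. f x + g x)" using x(1) unfolding graph_on_def by auto
  show "p \<in> {p :: int \<times> int. mesh_box \<delta> (fst p) (snd p) \<inter> graph_on X (\<lambda>x. f x + g x) \<noteq> {}}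
       \<union> (\<lambda>p. (fst p, snd p - 1)) ` {p :: int \<times> int. mesh_box \<delta> (fst p) (snd p) \<inter> graph_on X (\<lambda>x. f x + g x) \<noteq> {}}"
  proof (cases "f x + g x < (of_int j + 1) * \<delta>")
    case True
    have h0: "of_int j * \<delta> \<le> f x + g x" using fj g by linarith
    have "(x, f x + g x) \<in> mesh_box \<delta> i j" unfolding mesh_box_iff using xi h0 True by blast
    then have "(x, f x + g x) \<in> mesh_box \<delta> (fst p) (snd p)" unfolding p by simp
    from memT[OF this gr] show ?thesis by (rule UnI1)
  next
    case False
    have h1: "f x + g x < (of_int j + 1) * \<delta> + \<delta>" using fj g by linarith
    have e1: "of_int (j+1) * \<delta> = (of_int j + 1) * \<delta>" by simp
    have e2: "(of_int (j+1) + 1) * \<delta> = (of_int j + 1) * \<delta> + \<delta>" by (simp add: distrib_right)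
    have "(x, f x + g x) \<in> mesh_box \<delta> i (j+1)" unfolding mesh_box_iff e1 e2
      using xi False h1 by linarith
    then have "(x, f x + g x) \<in> mesh_box \<delta> (fst (i, j+1)) (snd (i, j+1))" by simp
    from memT[OF this gr] have "(i, j+1) \<in> {p :: int \<times> int. mesh_box \<delta> (fst p) (snd p) \<inter> graph_on X (\<lambda>x. f x + g x) \<noteq> {}}" .
    then have "p \<in> (\<lambda>p. (fst p, snd p - 1)) ` {p :: int \<times> int. mesh_box \<delta> (fst p) (snd p) \<inter> graph_on X (\<lambda>x. f x + g x) \<noteq> {}}"
      unfolding p by (rule rev_image_eqI) simp
    then show ?thesis by (rule UnI2)
  qed
qed

theorem lemma2:
  fixes X :: "real set" and \<delta> :: real and f g :: "real \<Rightarrow> real"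
  assumes "\<delta> > 0"
    and "uniformly_continuous_on X f" and "uniformly_continuous_on X g"
    and "\<forall>x\<in>X. g x > 0"
    and "\<forall>x\<in>X. \<bar>g x\<bar> \<le> \<delta>"
  shows "N_delta \<delta> (graph_on X f) \<le> 2 * N_delta \<delta> (graph_on X (\<lambda>x. f x + g x))"
proof -
  define S where "S = {p :: int \<times> int. mesh_box \<delta> (fst p) (snd p) \<inter> graph_on X f \<noteq> {}}"
  define T where "T = {p :: int \<times> int. mesh_box \<delta> (fst p) (snd p) \<inter> graph_on X (\<lambda>x. f x + g x) \<noteq> {}}"
  have sub: "S \<subseteq> T \<union> (\<lambda>p. (fst p, snd p - 1)) ` T"
    unfolding S_def T_def using sub_lemma[OF assms(1,4,5)] .
  show ?thesis
  proof (cases "finite T")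
    case False
    then show ?thesis unfolding N_delta_def T_def[symmetric] Let_def by (simp add: numeral_eq_enat)
  next
    case True
    then have fS: "finite S" using sub finite_subset by blast
    have "card S \<le> card (T \<union> (\<lambda>p. (fst p, snd p - 1)) ` T)"
      using sub True by (intro card_mono) auto
    also have "\<dots> \<le> card T + card ((\<lambda>p. (fst p, snd p - 1)) ` T)" by (rule card_Un_le)
    also have "\<dots> \<le> card T + card T" using card_image_le[OF True] by simp
    finally have "card S \<le> 2 * card T" by simp
    then show ?thesis unfolding N_delta_def S_def[symmetric] T_def[symmetric] Let_def
      using True fS by (simp add: numeral_eq_enat)
  qed
qed

end
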